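(* Let $n\ge2$ and let $k$ be a finite field with $|k|>9$. For every subgroup $H$ of $\mathrm{GL}_n(k)$ containing $\mathrm{SL}_n(k)$ we have $H^1(H,\mathfrak{pgl}_n(k))=0$.
   Context: $\mathfrak{pgl}_n(k)=\mathfrak{gl}_n(k)/\mathfrak{c}(k)$, where $\mathfrak{c}(k)$ is the space of scalar matrices, with $H$ acting by conjugation (the adjoint action). *)

theory Defs
  imports "HOL-Analysis.Analysis"
begin

text \<open>Matrices over a field k indexed by a finite type 'n, i.e. M_n(k) with n = CARD('n).\<close>

definition GL :: "('a::field ^'n::finite^'n) set" where
  "GL = {A. invertible A}"

definition SL :: "('a::field ^'n::finite^'n) set" where
  "SL = {A. det A = 1}"

definition is_subgroup_GL :: "('a::field ^'n::finite^'n) set \<Rightarrow> bool" where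
  "is_subgroup_GL H \<longleftrightarrow> H \<subseteq> GL \<and> mat 1 \<in> H \<and>
     (\<forall>A\<in>H. \<forall>B\<in>H. A ** B \<in> H) \<and> (\<forall>A\<in>H. matrix_inv A \<in> H)"

text \<open>pgl_n(k) = gl_n(k) / scalar matrices: two matrices represent the same
  element of pgl_n(k) iff they differ by a scalar matrix.\<close>

definition pgl_eq :: "'a::field ^'n::finite^'n \<Rightarrow> 'a^'n^'n \<Rightarrow> bool" where
  "pgl_eq A B \<longleftrightarrow> (\<exists>c. A - B = mat c)"

text \<open>Adjoint (conjugation) action of g on gl_n(k); it preserves scalars,
  hence descends to pgl_n(k).\<close>

definition adj :: "'a::field ^'n::finite^'n \<Rightarrow> 'a^'n^'n \<Rightarrow> 'a^'n^'n" where
  "adj g X = g ** X ** matrix_inv g"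

text \<open>1-cocycles H \<rightarrow> pgl_n(k), represented by (arbitrary) lifts to gl_n(k).\<close>

definition pgl_cocycle :: "('a::field ^'n::finite^'n) set \<Rightarrow> ('a^'n^'n \<Rightarrow> 'a^'n^'n) \<Rightarrow> bool" where
  "pgl_cocycle H f \<longleftrightarrow>
     (\<forall>g\<in>H. \<forall>h\<in>H. pgl_eq (f (g ** h)) (f g + adj g (f h)))"

definition pgl_coboundary :: "('a::field ^'n::finite^'n) set \<Rightarrow> ('a^'n^'n \<Rightarrow> 'a^'n^'n) \<Rightarrow> bool" where
  "pgl_coboundary H f \<longleftrightarrow> (\<exists>X. \<forall>g\<in>H. pgl_eq (f g) (adj g X - X))"

definition H1_pgl_vanishes :: "('a::field ^'n::finite^'n) set \<Rightarrow> bool" where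
  "H1_pgl_vanishes H \<longleftrightarrow> (\<forall>f. pgl_cocycle H f \<longrightarrow> pgl_coboundary H f)"

end

theory Submission
  imports Defs "HOL-Computational_Algebra.Polynomial"
begin


definition diagm :: "('n::finite \<Rightarrow> 'a::field) \<Rightarrow> 'a^'n^'n" where
  "diagm x = (\<chi> a b. if a = b then x a else 0)"

definition Em :: "'n::finite \<Rightarrow> 'n \<Rightarrow> 'a::field \<Rightarrow> 'a^'n^'n" where
  "Em i j s = (\<chi> a b. if a = i \<and> b = j then s else 0)"

definition tv :: "'n::finite \<Rightarrow> 'n \<Rightarrow> 'a::field \<Rightarrow> 'a^'n^'n" where
  "tv i j s = mat 1 + Em i j s"

lemma diagm_entry[simp]: "diagm x $ a $ b = (if a = b then x a else 0)"
  by (simp add: diagm_def)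

lemma Em_entry[simp]: "Em i j s $ a $ b = (if a = i \<and> b = j then s else 0)"
  by (simp add: Em_def)

lemma mat_entry[simp]: "(mat c :: 'a::zero^'n^'n) $ a $ b = (if a = b then c else 0)"
  by (simp add: mat_def)

lemma tv_entry: "tv i j s $ a $ b = (if a = b then 1 else 0) + (if a = i \<and> b = j then s else 0)"
  by (simp add: tv_def)

lemma mult_entry: "(A ** B) $ a $ b = (\<Sum>k\<in>UNIV. A$a$k * B$k$b)"
  by (simp add: matrix_matrix_mult_def)

lemma Em_mult_left: "(Em i j s ** A) $ a $ b = (if a = i then s * A$j$b else 0)"
proof -
  have "(\<Sum>k\<in>UNIV. Em i j s $a$k * A$k$b) = (\<Sum>k\<in>UNIV. if k = j then (if a = i then s * A$j$b else 0) else 0)"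
    by (rule sum.cong) auto
  then show ?thesis by (simp add: mult_entry)
qed

lemma Em_mult_right: "(A ** Em i j s) $ a $ b = (if b = j then A$a$i * s else 0)"
proof -
  have "(\<Sum>k\<in>UNIV. A$a$k * Em i j s $k$b) = (\<Sum>k\<in>UNIV. if k = i then (if b = j then A$a$i * s else 0) else 0)"
    by (rule sum.cong) auto
  then show ?thesis by (simp add: mult_entry)
qed

lemma diagm_mult_left: "(diagm x ** A) $ a $ b = x a * A$a$b"
proof -
  have "(\<Sum>k\<in>UNIV. diagm x $a$k * A$k$b) = (\<Sum>k\<in>UNIV. if k = a then x a * A$a$b else 0)"
    by (rule sum.cong) auto
  then show ?thesis by (simp add: mult_entry)
qed

lemma diagm_mult_right: "(A ** diagm x) $ a $ b = A$a$b * x b"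
proof -
  have "(\<Sum>k\<in>UNIV. A$a$k * diagm x $k$b) = (\<Sum>k\<in>UNIV. if k = b then A$a$b * x b else 0)"
    by (rule sum.cong) auto
  then show ?thesis by (simp add: mult_entry)
qed

lemma mm_add_right: "(A + B) ** (C::'a::field^'n::finite^'n) = A ** C + B ** C"
  by (simp add: vec_eq_iff mult_entry distrib_right sum.distrib)
lemma mm_add_left: "(C::'a::field^'n::finite^'n) ** (A + B) = C ** A + C ** B"
  by (rule matrix_add_ldistrib)
lemma mm_diff_right: "(A - B) ** (C::'a::field^'n::finite^'n) = A ** C - B ** C"
  by (simp add: vec_eq_iff mult_entry left_diff_distrib sum_subtractf)
lemma mm_diff_left: "(C::'a::field^'n::finite^'n) ** (A - B) = C ** A - C ** B"
  by (simp add: vec_eq_iff mult_entry right_diff_distrib sum_subtractf)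

lemma Em_Em: "Em i j s ** Em k l r = (if j = k then Em i l (s * r) else 0)"
  by (auto simp: vec_eq_iff Em_mult_left)

lemma diagm_mult: "diagm x ** diagm y = diagm (\<lambda>a. x a * y a)"
  by (simp add: vec_eq_iff diagm_mult_left)

lemma diagm_one: "diagm (\<lambda>_. 1) = mat 1"
  by (simp add: vec_eq_iff)

lemma det_diagm: "det (diagm x) = prod x UNIV"
  by (subst det_diagonal) auto

lemma tv_mult: "i \<noteq> j \<Longrightarrow> tv i j s ** tv i j r = tv i j (s + r)"
  by (simp add: tv_def mm_add_left mm_add_right Em_Em vec_eq_iff)

lemma tv_zero: "tv i j 0 = mat 1"
  by (simp add: vec_eq_iff tv_def)


lemma inv_props:
  fixes A :: "'a::field^'n::finite^'n"
  assumes "invertible A"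
  shows "A ** matrix_inv A = mat 1" "matrix_inv A ** A = mat 1"
proof -
  have "\<exists>A'. A ** A' = mat 1 \<and> A' ** A = mat 1" using assms by (simp add: invertible_def)
  then have "A ** matrix_inv A = mat 1 \<and> matrix_inv A ** A = mat 1"
    unfolding matrix_inv_def by (rule someI_ex)
  then show "A ** matrix_inv A = mat 1" "matrix_inv A ** A = mat 1" by auto
qed

lemma inv_unique:
  fixes A B :: "'a::field^'n::finite^'n"
  assumes "A ** B = mat 1"
  shows "matrix_inv A = B" "invertible A"
proof -
  have BA: "B ** A = mat 1" using assms matrix_left_right_inverse by blast
  show inv: "invertible A" using assms BA invertible_def by blast
  have "matrix_inv A = matrix_inv A ** (A ** B)" by (simp add: assms)
  also have "\<dots> = B" by (simp add: matrix_mul_assoc inv_props[OF inv])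
  finally show "matrix_inv A = B" .
qed

lemma inv_mat1: "matrix_inv (mat 1 :: 'a::field^'n::finite^'n) = mat 1"
  by (rule inv_unique) simp

lemma inv_mult:
  fixes A B :: "'a::field^'n::finite^'n"
  assumes "invertible A" "invertible B"
  shows "matrix_inv (A ** B) = matrix_inv B ** matrix_inv A"
proof (rule inv_unique)
  have "A ** B ** (matrix_inv B ** matrix_inv A) = A ** (B ** matrix_inv B) ** matrix_inv A"
    by (simp add: matrix_mul_assoc)
  then show "A ** B ** (matrix_inv B ** matrix_inv A) = mat 1"
    by (simp add: inv_props assms)
qed

lemma inv_inv:
  fixes A :: "'a::field^'n::finite^'n"
  assumes "invertible A"
  shows "matrix_inv (matrix_inv A) = A" "invertible (matrix_inv A)"
  using inv_unique[OF inv_props(2)[OF assms]] by auto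

lemma adj_mat1: "adj (mat 1 :: 'a::field^'n::finite^'n) X = X"
  by (simp add: adj_def inv_mat1)

lemma adj_mult:
  fixes g h :: "'a::field^'n::finite^'n"
  assumes "invertible g" "invertible h"
  shows "adj (g ** h) X = adj g (adj h X)"
  by (simp add: adj_def inv_mult assms matrix_mul_assoc)

lemma adj_add: "adj g (X + Y) = adj g X + adj g (Y :: 'a::field^'n::finite^'n)"
  by (simp add: adj_def mm_add_left mm_add_right)

lemma adj_diff: "adj g (X - Y) = adj g X - adj g (Y :: 'a::field^'n::finite^'n)"
  by (simp add: adj_def mm_diff_left mm_diff_right)

lemma adj_zero: "adj g (0 :: 'a::field^'n::finite^'n) = 0"
  by (simp add: adj_def)

lemma adj_uminus: "adj g (- X) = - adj g (X :: 'a::field^'n::finite^'n)"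
  using adj_diff[of g 0 X] by (simp add: adj_zero)

lemma adj_sum: "finite S \<Longrightarrow> adj g (\<Sum>x\<in>S. F x) = (\<Sum>x\<in>S. adj g (F x :: 'a::field^'n::finite^'n))"
  by (induction S rule: finite_induct) (simp_all add: adj_zero adj_add)

lemma mat_mult_comm: "(mat c :: 'a::field^'n::finite^'n) ** A = A ** mat c"
  by (simp add: vec_eq_iff mult_entry if_distrib if_distribR sum.delta sum.delta' cong: if_cong)

lemma adj_mat:
  fixes g :: "'a::field^'n::finite^'n"
  assumes "invertible g"
  shows "adj g (mat c) = mat c"
proof -
  have "g ** mat c ** matrix_inv g = mat c ** (g ** matrix_inv g)"
    by (simp add: mat_mult_comm matrix_mul_assoc)
  then show ?thesis by (simp add: adj_def inv_props assms)
qed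

lemma pgl_refl[simp]: "pgl_eq A A"
  unfolding pgl_eq_def by (rule exI[of _ 0]) simp

lemma mat_add': "mat (a + b) = (mat a + mat b :: 'a::field^'n::finite^'n)"
  by (simp add: vec_eq_iff)
lemma mat_diff': "mat (a - b) = (mat a - mat b :: 'a::field^'n::finite^'n)"
  by (simp add: vec_eq_iff)
lemma mat_uminus': "mat (- a) = (- mat a :: 'a::field^'n::finite^'n)"
  by (simp add: vec_eq_iff)

lemma pgl_sym: "pgl_eq A B \<Longrightarrow> pgl_eq B (A :: 'a::field^'n::finite^'n)"
  unfolding pgl_eq_def by (metis minus_diff_eq mat_uminus')

lemma pgl_trans: "pgl_eq A B \<Longrightarrow> pgl_eq B C \<Longrightarrow> pgl_eq A (C :: 'a::field^'n::finite^'n)"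
  unfolding pgl_eq_def
proof (elim exE)
  fix c d assume "A - B = mat c" "B - C = mat d"
  then have "A - C = mat (c + d)" by (simp add: mat_add' algebra_simps)
  then show "\<exists>c. A - C = mat c" by blast
qed

lemma pgl_add: "pgl_eq A B \<Longrightarrow> pgl_eq C D \<Longrightarrow> pgl_eq (A + C) (B + (D :: 'a::field^'n::finite^'n))"
  unfolding pgl_eq_def
proof (elim exE)
  fix c d assume "A - B = mat c" "C - D = mat d"
  then have "(A + C) - (B + D) = mat (c + d)" by (simp add: mat_add') (metis add_diff_add)
  then show "\<exists>c. (A + C) - (B + D) = mat c" by blast
qed

lemma pgl_diff: "pgl_eq A B \<Longrightarrow> pgl_eq C D \<Longrightarrow> pgl_eq (A - C) (B - (D :: 'a::field^'n::finite^'n))"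
  unfolding pgl_eq_def
proof (elim exE)
  fix c d assume "A - B = mat c" "C - D = mat d"
  then have "(A - C) - (B - D) = mat (c - d)" by (simp add: mat_diff') (metis diff_diff_eq2 diff_add_eq diff_diff_add add_diff_add diff_diff_eq add.commute)
  then show "\<exists>c. (A - C) - (B - D) = mat c" by blast
qed

lemma pgl_adj: "invertible g \<Longrightarrow> pgl_eq A B \<Longrightarrow> pgl_eq (adj g A) (adj g (B :: 'a::field^'n::finite^'n))"
  unfolding pgl_eq_def by (metis adj_diff adj_mat)

lemma pgl_mat: "pgl_eq (A + mat c) (A :: 'a::field^'n::finite^'n)"
  unfolding pgl_eq_def by auto

lemma pgl_offdiag: "pgl_eq A B \<Longrightarrow> a \<noteq> b \<Longrightarrow> A$a$b = (B :: 'a::field^'n::finite^'n)$a$b"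
  unfolding pgl_eq_def
proof (elim exE)
  fix c assume "A - B = mat c" "a \<noteq> b"
  then have "(A - B)$a$b = 0" by simp
  then show ?thesis by simp
qed

lemma pgl_diag: "pgl_eq A B \<Longrightarrow> A$a$a - B$a$a = A$b$b - (B :: 'a::field^'n::finite^'n)$b$b"
  unfolding pgl_eq_def
proof (elim exE)
  fix c assume h: "A - B = mat c"
  have "(A - B)$a$a = c" "(A - B)$b$b = c" by (simp_all add: h)
  then show ?thesis by simp
qed

lemma pgl_intro:
  assumes "\<And>a b. a \<noteq> b \<Longrightarrow> A$a$b = B$a$b" "\<And>a b. A$a$a - B$a$a = A$b$b - (B :: 'a::field^'n::finite^'n)$b$b"
  shows "pgl_eq A B"
  unfolding pgl_eq_def
proof
  fix a0 :: 'n
  show "A - B = mat (A$a0$a0 - B$a0$a0)"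
    using assms by (auto simp: vec_eq_iff)
qed

lemma pgl_sum: "finite S \<Longrightarrow> (\<And>x. x \<in> S \<Longrightarrow> pgl_eq (F x) (G x)) \<Longrightarrow>
   pgl_eq (\<Sum>x\<in>S. F x) (\<Sum>x\<in>S. G x :: 'a::field^'n::finite^'n)"
  by (induction S rule: finite_induct) (auto intro: pgl_add)


lemma det_tv: "i \<noteq> j \<Longrightarrow> det (tv i j s :: 'a::field^'n::finite^'n) = 1"
proof -
  assume ij: "i \<noteq> j"
  have "tv i j s = (\<chi> k. if k = i then row i (mat 1) + s *s row j (mat 1) else row k (mat 1 :: 'a^'n^'n))"
    by (auto simp: vec_eq_iff tv_def row_def)
  then show ?thesis using det_row_operation[OF ij, of "mat 1" s] by simp
qed

lemma tv_in_SL: "i \<noteq> j \<Longrightarrow> tv i j s \<in> SL"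
  by (simp add: SL_def det_tv)

lemma inv_tv: "i \<noteq> j \<Longrightarrow> matrix_inv (tv i j s) = tv i j (- s)"
  by (rule inv_unique) (simp add: tv_mult tv_zero)

lemma invertible_tv: "i \<noteq> j \<Longrightarrow> invertible (tv i j s :: 'a::field^'n::finite^'n)"
  by (simp add: invertible_det_nz det_tv)

lemma adj_tv_entry:
  assumes "i \<noteq> j"
  shows "adj (tv i j s) Y $ a $ b = Y$a$b + (if a = i then s * Y$j$b else 0)
     - (if b = j then Y$a$i * s else 0) - (if a = i \<and> b = j then s * s * Y$j$i else 0)"
proof -
  have "adj (tv i j s) Y = (mat 1 + Em i j s) ** Y ** (mat 1 + Em i j (-s))"
    by (simp add: adj_def inv_tv assms) (simp add: tv_def)
  also have "\<dots> = Y + Em i j s ** Y + Y ** Em i j (-s) + Em i j s ** Y ** Em i j (-s)"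
    by (simp add: mm_add_left mm_add_right algebra_simps)
  finally show ?thesis
    by (simp add: Em_mult_left Em_mult_right assms)
qed

lemma inv_diagm: "(\<And>a. x a \<noteq> 0) \<Longrightarrow> matrix_inv (diagm x) = diagm (\<lambda>a. inverse (x a))"
  by (rule inv_unique) (simp add: diagm_mult diagm_one)

lemma invertible_diagm: "(\<And>a. x a \<noteq> 0) \<Longrightarrow> invertible (diagm x)"
  using inv_unique(2)[of "diagm x" "diagm (\<lambda>a. inverse (x a))"] by (simp add: diagm_mult diagm_one)

lemma adj_diagm_entry:
  assumes "\<And>a. x a \<noteq> 0"
  shows "adj (diagm x) Y $ a $ b = x a * Y$a$b * inverse (x b)"
  by (simp add: adj_def inv_diagm assms diagm_mult_left diagm_mult_right)

lemma H_inv: "is_subgroup_GL H \<Longrightarrow> g \<in> H \<Longrightarrow> invertible g"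
  by (auto simp: is_subgroup_GL_def GL_def)

lemma H_mult: "is_subgroup_GL H \<Longrightarrow> g \<in> H \<Longrightarrow> h \<in> H \<Longrightarrow> g ** h \<in> H"
  by (auto simp: is_subgroup_GL_def)

lemma H_minv: "is_subgroup_GL H \<Longrightarrow> g \<in> H \<Longrightarrow> matrix_inv g \<in> H"
  by (auto simp: is_subgroup_GL_def)

lemma H_one: "is_subgroup_GL H \<Longrightarrow> mat 1 \<in> H"
  by (auto simp: is_subgroup_GL_def)

lemma coc_mult: "pgl_cocycle H f \<Longrightarrow> g \<in> H \<Longrightarrow> h \<in> H \<Longrightarrow> pgl_eq (f (g ** h)) (f g + adj g (f h))"
  by (simp add: pgl_cocycle_def)

lemma coc_one:
  fixes f :: "'a::field^'n::finite^'n \<Rightarrow> 'a^'n^'n"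
  assumes "is_subgroup_GL H" "pgl_cocycle H f"
  shows "pgl_eq (f (mat 1)) 0"
proof -
  have "pgl_eq (f (mat 1)) (f (mat 1) + f (mat 1))"
    using coc_mult[OF assms(2) H_one[OF assms(1)] H_one[OF assms(1)]] by (simp add: adj_mat1)
  from pgl_diff[OF this pgl_refl[of "f (mat 1)"]] have "pgl_eq 0 (f (mat 1))" by simp
  then show ?thesis by (rule pgl_sym)
qed

lemma coc_inv:
  fixes f :: "'a::field^'n::finite^'n \<Rightarrow> 'a^'n^'n"
  assumes "is_subgroup_GL H" "pgl_cocycle H f" "g \<in> H"
  shows "pgl_eq (f (matrix_inv g)) (- adj (matrix_inv g) (f g))"
proof -
  have ig: "invertible g" using H_inv assms by blast
  have "pgl_eq (f (matrix_inv g ** g)) (f (matrix_inv g) + adj (matrix_inv g) (f g))"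
    using coc_mult[OF assms(2) H_minv[OF assms(1,3)] assms(3)] .
  then have X: "pgl_eq (f (mat 1)) (f (matrix_inv g) + adj (matrix_inv g) (f g))"
    by (simp add: inv_props(2) ig)
  have "pgl_eq (f (matrix_inv g) + adj (matrix_inv g) (f g)) 0"
    by (rule pgl_trans[OF pgl_sym[OF X] coc_one[OF assms(1,2)]])
  from pgl_diff[OF this pgl_refl[of "adj (matrix_inv g) (f g)"]] show ?thesis by simp
qed

lemma coc_conj:
  fixes f :: "'a::field^'n::finite^'n \<Rightarrow> 'a^'n^'n"
  assumes H: "is_subgroup_GL H" and f: "pgl_cocycle H f" and g: "g \<in> H" and u: "u \<in> H"
  shows "pgl_eq (f (g ** u ** matrix_inv g)) (f g + adj g (f u) - adj (g ** u ** matrix_inv g) (f g))"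
proof -
  have ig: "invertible g" "invertible u" using H_inv assms by blast+
  have gu: "g ** u \<in> H" using H_mult H g u by blast
  have C: "pgl_eq (f (g ** u ** matrix_inv g)) (f (g ** u) + adj (g ** u) (f (matrix_inv g)))"
    using coc_mult[OF f gu H_minv[OF H g]] .
  have A: "pgl_eq (f (g ** u)) (f g + adj g (f u))" using coc_mult[OF f g u] .
  have B: "pgl_eq (adj (g ** u) (f (matrix_inv g))) (adj (g ** u) (- adj (matrix_inv g) (f g)))"
    using pgl_adj[OF invertible_mult[OF ig] coc_inv[OF H f g]] .
  have D: "adj (g ** u) (- adj (matrix_inv g) (f g)) = - adj (g ** u ** matrix_inv g) (f g)"
    by (simp only: adj_uminus adj_mult[OF invertible_mult[OF ig] inv_inv(2)[OF ig(1)]])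
  have "pgl_eq (f (g ** u ** matrix_inv g)) ((f g + adj g (f u)) + - adj (g ** u ** matrix_inv g) (f g))"
    using pgl_trans[OF C pgl_add[OF A B]] unfolding D .
  then show ?thesis unfolding diff_conv_add_uminus .
qed

lemma grp1: "(a::'b::ab_group_add) - (b - y) + (c - (d - b)) = a + c - (d - y)"
  by (simp add: algebra_simps)
lemma grp2: "(a::'b::ab_group_add) - (b - y) - (c - z) = a - (b + c - (y + z))"
  by (simp add: algebra_simps)

definition fsh :: "('a::field^'n::finite^'n \<Rightarrow> 'a^'n^'n) \<Rightarrow> 'a^'n^'n \<Rightarrow> 'a^'n^'n \<Rightarrow> 'a^'n^'n" where
  "fsh f Y g = f g - (adj g Y - Y)"

lemma fsh_cocycle:
  fixes f :: "'a::field^'n::finite^'n \<Rightarrow> 'a^'n^'n"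
  assumes H: "is_subgroup_GL H" and f: "pgl_cocycle H f"
  shows "pgl_cocycle H (fsh f Y)"
  unfolding pgl_cocycle_def
proof (intro ballI)
  fix g h assume g: "g \<in> H" and h: "h \<in> H"
  have ig: "invertible g" "invertible h" using H_inv H g h by blast+
  have e: "fsh f Y g + adj g (fsh f Y h) = (f g + adj g (f h)) - (adj (g ** h) Y - Y)"
    unfolding fsh_def adj_diff adj_mult[OF ig] by (rule grp1)
  show "pgl_eq (fsh f Y (g ** h)) (fsh f Y g + adj g (fsh f Y h))"
    unfolding e unfolding fsh_def by (rule pgl_diff[OF coc_mult[OF f g h] pgl_refl])
qed

lemma fsh_fsh: "fsh (fsh f Y) Z = fsh f (Y + Z)"
  unfolding fsh_def fun_eq_iff adj_add by (simp add: grp2)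

lemma fsh_zero_cob:
  assumes "\<forall>g\<in>H. pgl_eq (fsh f Y g) 0"
  shows "pgl_coboundary H f"
  unfolding pgl_coboundary_def
proof (intro exI ballI)
  fix g assume "g \<in> H"
  then have "pgl_eq (fsh f Y g + (adj g Y - Y)) (0 + (adj g Y - Y))"
    using assms \<open>g \<in> H\<close> by (intro pgl_add) auto
  then show "pgl_eq (f g) (adj g Y - Y)" by (simp add: fsh_def)
qed


lemma card_zero_field: "of_nat CARD('k::{field,finite}) = (0::'k)"
proof -
  have "(\<Sum>x\<in>UNIV. x) = (\<Sum>x\<in>UNIV. (x + 1::'k))"
  proof (rule sum.reindex_bij_witness[of _ "\<lambda>x. x + 1" "\<lambda>x. x - 1"]) qed auto
  also have "\<dots> = (\<Sum>x\<in>UNIV. x) + of_nat CARD('k)"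
    by (simp add: sum.distrib)
  finally show ?thesis by simp
qed

lemma exists_pow_ne1:
  assumes "m \<ge> 1" "m + 1 < CARD('k::{field,finite})"
  shows "\<exists>c::'k. c \<noteq> 0 \<and> c ^ m \<noteq> 1"
proof -
  let ?p = "monom (1::'k) m + [:-1:]"
  have dp: "degree ?p = m" using assms(1) by (subst degree_add_eq_left) (simp_all add: degree_monom_eq)
  have p0: "?p \<noteq> 0" using dp assms(1) by auto
  have "card {x. poly ?p x = 0} \<le> m" using card_poly_roots_bound[OF p0] dp by simp
  moreover have "{x. poly ?p x = 0} = {x::'k. x ^ m = 1}" by (simp add: poly_monom)
  ultimately have c1: "card {x::'k. x ^ m = 1} \<le> m" by simp
  have "card (insert 0 {x::'k. x ^ m = 1}) \<le> m + 1"
    using c1 card_insert_le_m1[of m "{x::'k. x ^ m = 1}" 0] assms(1)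
    by (metis Suc_eq_plus1 card_insert_if finite le_SucI not_less_eq_eq)
  then have "insert 0 {x::'k. x ^ m = 1} \<noteq> UNIV" using assms(2) by auto
  then show ?thesis by auto
qed

lemma char2_sqrt:
  assumes "(2::'k::{field,finite}) = 0"
  shows "\<exists>u::'k. u * u = z"
proof -
  have "inj (\<lambda>u::'k. u * u)"
  proof (rule injI)
    fix u v :: 'k assume h: "u * u = v * v"
    have "(u - v) * (u - v) = u * u + v * v - 2 * u * v" by (simp add: algebra_simps)
    also have "\<dots> = 2 * (u * u)" using assms h by (simp add: algebra_simps)
    also have "\<dots> = 0" using assms by simp
    finally show "u = v" by simp
  qed
  then have "surj (\<lambda>u::'k. u * u)" using finite_UNIV_inj_surj[of "\<lambda>u::'k. u * u"] by simp
  then show ?thesis by (metis surjD)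
qed

definition additive :: "('k::field \<Rightarrow> 'k) \<Rightarrow> bool" where
  "additive g \<longleftrightarrow> (\<forall>s r. g (s + r) = g s + g r)"

lemma additive_0: "additive g \<Longrightarrow> g 0 = 0"
  unfolding additive_def by (metis add.right_neutral add_left_cancel)

lemma additive_minus: "additive g \<Longrightarrow> g (- s) = - g s"
  using additive_0[of g] unfolding additive_def by (metis add.right_inverse add_eq_0_iff)

lemma additive_diff: "additive g \<Longrightarrow> g (s - r) = g s - g r"
  using additive_minus[of g] unfolding additive_def by (metis diff_conv_add_uminus)

lemma additive_linear:
  fixes g :: "'k::{field,finite} \<Rightarrow> 'k"
  assumes add: "additive g" and eq: "\<And>c s. c \<noteq> 0 \<Longrightarrow> g (c * c * s) = c * c * g s"
  shows "g s = s * g 1"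
proof -
  have eq': "g (c * c * t) = c * c * g t" for c t
    using eq[of c t] additive_0[OF add] by (cases "c = 0") auto
  show ?thesis
  proof (cases "(2::'k) = 0")
    case True
    then obtain u where "u * u = s" using char2_sqrt by blast
    then show ?thesis using eq'[of u 1] by simp
  next
    case False
    let ?u = "(s + 1) / 2" and ?v = "(s - 1) / 2"
    have "?u + ?v = ((s + 1) + (s - 1)) / 2" by (rule add_divide_distrib[symmetric])
    also have "\<dots> = (2 * s) / 2" by (simp add: algebra_simps)
    finally have u1: "?u + ?v = s" using False by simp
    have "?u - ?v = ((s + 1) - (s - 1)) / 2" by (rule diff_divide_distrib[symmetric])
    also have "\<dots> = 2 / 2" by (simp add: algebra_simps)
    finally have u2: "?u - ?v = 1" using False by simp
    note uv = u1 u2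
    have "?u * ?u * 1 - ?v * ?v * 1 = (?u + ?v) * (?u - ?v)" by (simp add: algebra_simps)
    then have sv: "s = ?u * ?u * 1 - ?v * ?v * 1" using uv by simp
    have "g s = g (?u * ?u * 1) - g (?v * ?v * 1)" by (subst sv, rule additive_diff[OF add])
    also have "\<dots> = (?u * ?u * 1 - ?v * ?v * 1) * g 1" by (simp only: eq') (simp add: algebra_simps)
    finally show ?thesis using sv by simp
  qed
qed

lemma additive_inv_zero:
  fixes g :: "'k::{field,finite} \<Rightarrow> 'k"
  assumes add: "additive g" and eq: "\<And>c s. c \<noteq> 0 \<Longrightarrow> g (c * c * s) = g s"
    and card: "CARD('k) > 3"
  shows "g s = 0"
proof -
  obtain c :: 'k where c: "c \<noteq> 0" "c ^ 2 \<noteq> 1" using exists_pow_ne1[of 2] card by auto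
  have d: "c * c - 1 \<noteq> 0" using c by (simp add: power2_eq_square)
  have "g ((c * c - 1) * t) = 0" for t
  proof -
    have "g (c * c * t) = g t" by (rule eq[OF c(1)])
    moreover have "(c * c - 1) * t = c * c * t - t" by (simp add: algebra_simps)
    ultimately show ?thesis using additive_diff[OF add, of "c * c * t" t] by simp
  qed
  from this[of "s / (c * c - 1)"] show ?thesis using d by simp
qed


lemma prod_if_pt:
  assumes "finite A" "a \<in> A"
  shows "prod (\<lambda>b. if b = a then u else g b) A = u * prod g (A - {a})"
proof -
  have "prod (\<lambda>b. if b = a then u else g b) A = u * prod (\<lambda>b. if b = a then u else g b) (A - {a})"
    using prod.remove[OF assms, of "\<lambda>b. if b = a then u else g b"] by simp
  also have "prod (\<lambda>b. if b = a then u else g b) (A - {a}) = prod g (A - {a})"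
    by (rule prod.cong) auto
  finally show ?thesis .
qed

lemma mul_inv_cancel3: "(c::'k::field) \<noteq> 0 \<Longrightarrow> c * y * inverse c = y"
  by (simp add: field_simps)

locale rootctx =
  fixes H :: "('k::{field,finite}^'n::finite^'n) set" and f :: "'k^'n^'n \<Rightarrow> 'k^'n^'n" and i j :: 'n
  assumes H: "is_subgroup_GL H" and SLH: "SL \<subseteq> H" and f: "pgl_cocycle H f"
    and torus: "\<And>x. (\<And>a. x a \<noteq> 0) \<Longrightarrow> prod x UNIV = 1 \<Longrightarrow> pgl_eq (f (diagm x)) 0"
    and ij: "i \<noteq> j" and card: "CARD('k) > 9"
begin

lemma tvH: "tv i j s \<in> H" using tv_in_SL[OF ij] SLH by blast

lemma U: "pgl_eq (f (tv i j (s + r))) (f (tv i j s) + adj (tv i j s) (f (tv i j r)))"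
  using coc_mult[OF f tvH tvH] by (simp add: tv_mult ij)

lemma conj_diag:
  assumes "\<And>a. x a \<noteq> 0"
  shows "diagm x ** tv i j s ** matrix_inv (diagm x) = tv i j (x i * s * inverse (x j))"
  using assms ij
  by (auto simp: vec_eq_iff inv_diagm diagm_mult_left diagm_mult_right tv_entry)

lemma T:
  assumes nz: "\<And>a. x a \<noteq> 0" and p: "prod x UNIV = 1"
  shows "pgl_eq (f (tv i j (x i * s * inverse (x j)))) (adj (diagm x) (f (tv i j s)))"
proof -
  have gH: "diagm x \<in> H" using SLH p by (auto simp: SL_def det_diagm)
  have ig: "invertible (diagm x)" using invertible_diagm nz by blast
  let ?c = "diagm x ** tv i j s ** matrix_inv (diagm x)"
  have ic: "invertible ?c"
    using H_inv[OF H] H_mult[OF H] H_minv[OF H] gH tvH by metis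
  have f0: "pgl_eq (f (diagm x)) 0" using torus nz p by blast
  have A: "pgl_eq (f ?c) (f (diagm x) + adj (diagm x) (f (tv i j s)) - adj ?c (f (diagm x)))"
    using coc_conj[OF H f gH tvH] .
  have B: "pgl_eq (f (diagm x) + adj (diagm x) (f (tv i j s)) - adj ?c (f (diagm x)))
       (0 + adj (diagm x) (f (tv i j s)) - adj ?c 0)"
    by (intro pgl_diff pgl_add f0 pgl_refl pgl_adj[OF ic])
  show ?thesis using pgl_trans[OF A B] by (simp add: conj_diag nz adj_zero)
qed

abbreviation "phi s \<equiv> f (tv i j s)"

lemma U_off: "a \<noteq> b \<Longrightarrow> phi (s + r) $ a $ b = phi s $ a $ b + adj (tv i j s) (phi r) $ a $ b"
  using pgl_offdiag[OF U] by simp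

lemma U_diag: "phi (s + r) $ a $ a - (phi s + adj (tv i j s) (phi r)) $ a $ a
    = phi (s + r) $ b $ b - (phi s + adj (tv i j s) (phi r)) $ b $ b"
  using pgl_diag[OF U] .

lemma gamma_add: "phi (s + r) $ j $ i = phi s $ j $ i + phi r $ j $ i"
  using U_off[of j i s r] ij by (simp add: adj_tv_entry)

lemma beta_rel: "phi (s + r) $ i $ j = phi s $ i $ j + phi r $ i $ j - s * (phi r $ i $ i - phi r $ j $ j) - s * s * phi r $ j $ i"
  using U_off[of i j s r] ij by (simp add: adj_tv_entry algebra_simps)

lemma delta_rel: "a \<noteq> j \<Longrightarrow> phi (s + r) $ a $ a - phi (s + r) $ j $ j =
   (phi s $ a $ a - phi s $ j $ j) + (phi r $ a $ a - phi r $ j $ j) + (if a = i then 2 else 1) * s * phi r $ j $ i"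
  using U_diag[where a=a and b=j and s=s and r=r] ij by (auto simp: adj_tv_entry algebra_simps)

lemma T_off:
  assumes nz: "\<And>a. x a \<noteq> 0" and p: "prod x UNIV = 1" and ab: "a \<noteq> b"
  shows "phi (x i * s * inverse (x j)) $ a $ b = x a * phi s $ a $ b * inverse (x b)"
  using pgl_offdiag[OF T[OF nz p, where s=s] ab] by (simp add: adj_diagm_entry nz)

lemma T_diag:
  assumes nz: "\<And>a. x a \<noteq> 0" and p: "prod x UNIV = 1"
  shows "phi (x i * s * inverse (x j)) $ a $ a - phi (x i * s * inverse (x j)) $ b $ b = phi s $ a $ a - phi s $ b $ b"
  using pgl_diag[OF T[OF nz p, where s=s], where a=a and b=b] by (simp add: adj_diagm_entry nz mul_inv_cancel3) (simp add: algebra_simps)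

definition "tij c = (\<lambda>a. if a = i then c else if a = j then inverse c else (1::'k))"

lemma tij_nz: "c \<noteq> 0 \<Longrightarrow> tij c a \<noteq> 0" by (simp add: tij_def)

lemma tij_prod: "c \<noteq> 0 \<Longrightarrow> prod (tij c) UNIV = 1"
proof -
  assume c: "c \<noteq> 0"
  have "prod (tij c) UNIV = c * prod (\<lambda>b. if b = j then inverse c else 1) (UNIV - {i})"
    unfolding tij_def by (rule prod_if_pt) auto
  also have "prod (\<lambda>b. if b = j then inverse c else 1) (UNIV - {i}) = inverse c * prod (\<lambda>_. 1) (UNIV - {i} - {j})"
    using ij by (intro prod_if_pt) auto
  finally show ?thesis using c by simp
qed

definition "tau a d = (\<lambda>b. if b = a then inverse (d * d) else if b = i \<or> b = j then d else (1::'k))"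

lemma tau_nz: "d \<noteq> 0 \<Longrightarrow> tau a d b \<noteq> 0" by (simp add: tau_def)

lemma tau_prod: "a \<noteq> i \<Longrightarrow> a \<noteq> j \<Longrightarrow> d \<noteq> 0 \<Longrightarrow> prod (tau a d) UNIV = 1"
proof -
  assume a: "a \<noteq> i" "a \<noteq> j" and d: "d \<noteq> 0"
  have "prod (tau a d) UNIV = inverse (d * d) * prod (\<lambda>b. if b = i \<or> b = j then d else 1) (UNIV - {a})"
    unfolding tau_def by (rule prod_if_pt) auto
  also have "prod (\<lambda>b. if b = i \<or> b = j then d else 1) (UNIV - {a}) = d * prod (\<lambda>b. if b = j then d else 1) (UNIV - {a} - {i})"
  proof -
    have e: "(\<lambda>b. if b = i \<or> b = j then d else 1) = (\<lambda>b. if b = i then d else if b = j then d else (1::'k))" by auto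
    show ?thesis unfolding e using a by (intro prod_if_pt) auto
  qed
  also have "prod (\<lambda>b. if b = j then d else 1) (UNIV - {a} - {i}) = d * prod (\<lambda>_. 1) (UNIV - {a} - {i} - {j})"
    using a ij by (intro prod_if_pt) auto
  finally show ?thesis using d by (simp add: field_simps)
qed


lemma tij_i: "tij c i = c" by (simp add: tij_def)
lemma tij_j: "tij c j = inverse c" using ij by (simp add: tij_def)

lemma ex_pow: "m \<ge> 1 \<Longrightarrow> m + 1 < CARD('k) \<Longrightarrow> \<exists>c::'k. c \<noteq> 0 \<and> c ^ m \<noteq> 1"
  by (rule exists_pow_ne1)

lemma kill2: "(y::'k) = a * y * b \<Longrightarrow> a * b \<noteq> 1 \<Longrightarrow> y = 0"
proof -
  assume h: "y = a * y * b" "a * b \<noteq> 1"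
  then have "y * (1 - a * b) = 0" by (simp add: algebra_simps)
  then show "y = 0" using h(2) by simp
qed

lemma alg4: "(c::'k) \<noteq> 0 \<Longrightarrow> c * 1 * c * y = inverse c * y * inverse c \<Longrightarrow> c ^ 4 * y = y"
proof -
  assume c: "c \<noteq> 0" and h: "c * 1 * c * y = inverse c * y * inverse c"
  have "c ^ 4 * y = (c * c) * (c * 1 * c * y)" by (simp add: power_def algebra_simps)
  also have "\<dots> = (c * c) * (inverse c * y * inverse c)" by (simp only: h)
  also have "\<dots> = y" using c by (simp add: field_simps)
  finally show ?thesis .
qed

lemma alg6: "(c::'k) \<noteq> 0 \<Longrightarrow> (c * 1 * c) * (c * 1 * c) * y = inverse c * y * inverse c \<Longrightarrow> c ^ 6 * y = y"
proof -
  assume c: "c \<noteq> 0" and h: "(c * 1 * c) * (c * 1 * c) * y = inverse c * y * inverse c"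
  have "c ^ 6 * y = (c * c) * ((c * 1 * c) * (c * 1 * c) * y)" by (simp add: power_def algebra_simps)
  also have "\<dots> = (c * c) * (inverse c * y * inverse c)" by (simp only: h)
  also have "\<dots> = y" using c by (simp add: field_simps)
  finally show ?thesis .
qed

lemma kill_factor: "(y::'k) = k * y \<Longrightarrow> k \<noteq> 1 \<Longrightarrow> y = 0"
  by (metis mult_cancel_right2 mult.commute)

lemma pow_facts:
  assumes "d \<noteq> (0::'k)" "d ^ 6 \<noteq> 1"
  shows "d * d \<noteq> 1" "d * d * d \<noteq> 1"
proof -
  show "d * d \<noteq> 1"
  proof
    assume "d * d = 1"
    have "d ^ 6 = (d * d) * (d * d) * (d * d)" by algebra
    also have "\<dots> = 1" by (simp only: \<open>d * d = 1\<close> mult_1)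
    finally show False using assms by simp
  qed
  show "d * d * d \<noteq> 1"
  proof
    assume "d * d * d = 1"
    have "d ^ 6 = (d * d * d) * (d * d * d)" by algebra
    also have "\<dots> = 1" by (simp only: \<open>d * d * d = 1\<close> mult_1)
    finally show False using assms by simp
  qed
qed

lemma other_zero:
  assumes ab: "a \<noteq> b" and n1: "\<not> (a = i \<and> b = j)" and n2: "\<not> (a = j \<and> b = i)"
  shows "phi s $ a $ b = 0"
proof -
  obtain d :: 'k where d: "d \<noteq> 0" "d ^ 6 \<noteq> 1" using ex_pow[of 6] card by auto
  note pf = pow_facts[OF d]
  show ?thesis
  proof (cases "a \<noteq> i \<and> a \<noteq> j")
    case True
    have "phi (tau a d i * s * inverse (tau a d j)) $ a $ b = tau a d a * phi s $ a $ b * inverse (tau a d b)"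
      using T_off[OF tau_nz[OF d(1)] tau_prod[OF _ _ d(1)] ab] True by blast
    moreover have "tau a d i * s * inverse (tau a d j) = s" using True d(1) by (auto simp: tau_def)
    ultimately have e: "phi s $ a $ b = tau a d a * phi s $ a $ b * inverse (tau a d b)" by simp
    have "tau a d a * inverse (tau a d b) \<noteq> 1"
    proof (cases "b = i \<or> b = j")
      case True
      then have "tau a d a * inverse (tau a d b) = inverse (d * d * d)" using ab \<open>a \<noteq> i \<and> a \<noteq> j\<close>
        by (auto simp: tau_def field_simps)
      then show ?thesis using pf d by (metis inverse_1 inverse_inverse_eq)
    next
      case False
      then have "tau a d a * inverse (tau a d b) = inverse (d * d)" using ab by (auto simp: tau_def)
      then show ?thesis using pf d by (metis inverse_1 inverse_inverse_eq)
    qed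
    then show ?thesis using kill2[OF e] by blast
  next
    case False
    then have bn: "b \<noteq> i" "b \<noteq> j" using ab n1 n2 by auto
    have "phi (tau b d i * s * inverse (tau b d j)) $ a $ b = tau b d a * phi s $ a $ b * inverse (tau b d b)"
      using T_off[OF tau_nz[OF d(1)] tau_prod[OF bn d(1)] ab] by blast
    moreover have "tau b d i * s * inverse (tau b d j) = s" using bn d(1) by (simp add: tau_def)
    ultimately have e: "phi s $ a $ b = tau b d a * phi s $ a $ b * inverse (tau b d b)" by simp
    have "tau b d a * inverse (tau b d b) = d * d * d" using False bn ab by (auto simp: tau_def)
    then show ?thesis using kill2[OF e] pf by simp
  qed
qed

lemma gamma_torus: "c \<noteq> 0 \<Longrightarrow> phi (c * s * c) $ j $ i = inverse c * phi s $ j $ i * inverse c"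
  using T_off[OF tij_nz tij_prod, of c j i s] ij by (simp add: tij_i tij_j)

lemma beta_torus: "c \<noteq> 0 \<Longrightarrow> phi (c * s * c) $ i $ j = c * phi s $ i $ j * c"
  using T_off[OF tij_nz tij_prod, of c i j s] ij by (simp add: tij_i tij_j)

lemma diag_torus: "c \<noteq> 0 \<Longrightarrow> phi (c * s * c) $ a $ a - phi (c * s * c) $ j $ j = phi s $ a $ a - phi s $ j $ j"
  using T_diag[OF tij_nz tij_prod, of c s a j] ij by (simp add: tij_i tij_j)

lemma gamma_zero: "phi s $ j $ i = 0"
proof -
  let ?g = "\<lambda>s. phi s $ j $ i"
  let ?D = "\<lambda>s. phi s $ i $ i - phi s $ j $ j"
  have gadd: "additive ?g" unfolding additive_def using gamma_add by blast
  show ?thesis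
  proof (cases "(2::'k) = 0")
    case False
    have sym: "2 * s * ?g r = 2 * r * ?g s" for s r
    proof -
      have e1: "?D (s + r) = ?D s + ?D r + 2 * s * ?g r" using delta_rel[of i s r] ij by simp
      have e2: "?D (r + s) = ?D r + ?D s + 2 * r * ?g s" using delta_rel[of i r s] ij by simp
      have "s + r = r + s" by (rule add.commute)
      then have "?D s + ?D r + 2 * s * ?g r = ?D r + ?D s + 2 * r * ?g s" using e1 e2 by metis
      then show ?thesis by (metis add.commute add_left_cancel)
    qed
    have lin: "?g s = s * ?g 1" for s using sym[of s 1] False by simp
    obtain c :: 'k where c: "c \<noteq> 0" "c ^ 4 \<noteq> 1" using ex_pow[of 4] card by auto
    have h1: "?g (c * 1 * c) = (c * 1 * c) * ?g 1" by (rule lin)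
    have h2: "?g (c * 1 * c) = inverse c * ?g 1 * inverse c" by (rule gamma_torus[OF c(1)])
    have "c ^ 4 * ?g 1 = ?g 1" using alg4[OF c(1) trans[OF h1[symmetric] h2]] .
    then have "?g 1 = 0" using c(2) kill_factor[of "?g 1" "c ^ 4"] by simp
    then show ?thesis using lin[of s] by simp
  next
    case True
    have Dadd: "additive ?D" unfolding additive_def
      using delta_rel[of i] ij True by simp
    have D0: "?D s = 0" for s
      using additive_inv_zero[OF Dadd, of s] diag_torus[of _ _ i] card by (simp add: algebra_simps)
    have sym: "s * s * ?g r = r * r * ?g s" for s r
      using beta_rel[of s r] beta_rel[of r s] D0 by (simp add: algebra_simps)
    have q: "?g s = s * s * ?g 1" for s using sym[of s 1] by simp
    obtain c :: 'k where c: "c \<noteq> 0" "c ^ 6 \<noteq> 1" using ex_pow[of 6] card by auto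
    have h1: "?g (c * 1 * c) = (c * 1 * c) * (c * 1 * c) * ?g 1" by (rule q)
    have h2: "?g (c * 1 * c) = inverse c * ?g 1 * inverse c" by (rule gamma_torus[OF c(1)])
    have "c ^ 6 * ?g 1 = ?g 1" using alg6[OF c(1) trans[OF h1[symmetric] h2]] .
    then have "?g 1 = 0" using c(2) kill_factor[of "?g 1" "c ^ 6"] by simp
    then show ?thesis using q[of s] by simp
  qed
qed


lemma delta_zero: "phi s $ a $ a - phi s $ j $ j = 0"
proof (cases "a = j")
  case True then show ?thesis by simp
next
  case aj: False
  let ?D = "\<lambda>s. phi s $ a $ a - phi s $ j $ j"
  have Dadd: "additive ?D" unfolding additive_def
  proof (intro allI)
    fix s r
    show "?D (s + r) = ?D s + ?D r"
      using delta_rel[OF aj, of s r] gamma_zero[of r] by simp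
  qed
  have inv: "?D (c * c * t) = ?D t" if c: "c \<noteq> 0" for c t
  proof -
    have e: "c * c * t = c * t * c" by (simp add: algebra_simps)
    show ?thesis unfolding e by (rule diag_torus[OF c])
  qed
  show ?thesis using additive_inv_zero[OF Dadd inv] card by simp
qed

lemma beta_lin: "phi s $ i $ j = s * phi 1 $ i $ j"
proof -
  let ?b = "\<lambda>s. phi s $ i $ j"
  have badd: "additive ?b" unfolding additive_def
  proof (intro allI)
    fix s r
    have z: "phi r $ i $ i - phi r $ j $ j = 0" by (rule delta_zero)
    show "?b (s + r) = ?b s + ?b r"
      using beta_rel[of s r] gamma_zero[of r] z by simp
  qed
  have inv: "?b (c * c * t) = c * c * ?b t" if c: "c \<noteq> 0" for c t
  proof -
    have e: "c * c * t = c * t * c" by (simp add: algebra_simps)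
    show ?thesis unfolding e using beta_torus[OF c, of t] by (simp add: algebra_simps)
  qed
  show ?thesis by (rule additive_linear[OF badd inv])
qed

lemma root_form: "pgl_eq (phi s) (Em i j (phi 1 $ i $ j * s))"
proof (rule pgl_intro)
  fix a b :: 'n assume ab: "a \<noteq> b"
  show "phi s $ a $ b = Em i j (phi 1 $ i $ j * s) $ a $ b"
  proof (cases "a = i \<and> b = j")
    case True
    have "phi s $ i $ j = s * phi 1 $ i $ j" by (rule beta_lin)
    then show ?thesis using True by (simp add: mult.commute)
  next
    case nij: False
    show ?thesis
    proof (cases "a = j \<and> b = i")
      case True then show ?thesis using gamma_zero ij by auto
    next
      case False2: False
      then show ?thesis using other_zero[OF ab nij False2] nij by auto
    qed
  qed
next
  fix a b :: 'n
  show "phi s $ a $ a - Em i j (phi 1 $ i $ j * s) $ a $ a = phi s $ b $ b - Em i j (phi 1 $ i $ j * s) $ b $ b"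
  proof -
    have "Em i j (phi 1 $ i $ j * s) $ a $ a = 0" "Em i j (phi 1 $ i $ j * s) $ b $ b = 0" using ij by auto
    moreover have "phi s $ a $ a = phi s $ j $ j" "phi s $ b $ b = phi s $ j $ j"
      using delta_zero[of s a] delta_zero[of s b] by (simp_all only: right_minus_eq)
    ultimately show ?thesis by simp
  qed
qed

end


definition smul :: "'k::field \<Rightarrow> 'k^'n::finite^'n \<Rightarrow> 'k^'n^'n" where
  "smul c M = mat c ** M"

lemma smul_entry: "smul c M $ a $ b = c * M $ a $ b"
proof -
  have "(\<Sum>k\<in>UNIV. mat c $ a $ k * M $ k $ b) = (\<Sum>k\<in>UNIV. if k = a then c * M $ a $ b else 0)"
    by (rule sum.cong) auto
  then show ?thesis by (simp add: smul_def mult_entry)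
qed

lemma adj_smul: "adj g (smul c M) = smul c (adj g M)"
proof -
  have "g ** (mat c ** M) ** matrix_inv g = g ** mat c ** M ** matrix_inv g" by (simp add: matrix_mul_assoc)
  also have "\<dots> = mat c ** g ** M ** matrix_inv g" by (simp only: mat_mult_comm[of c g])
  also have "\<dots> = mat c ** (g ** M ** matrix_inv g)" by (simp add: matrix_mul_assoc)
  finally show ?thesis by (simp add: adj_def smul_def)
qed

lemma smul_diff: "smul c (A - B) = smul c A - smul c B"
  by (simp add: smul_def mm_diff_left)

lemma pgl_smul: "pgl_eq A B \<Longrightarrow> pgl_eq (smul c A) (smul c (B :: 'k::field^'n::finite^'n))"
  unfolding pgl_eq_def
proof (elim exE)
  fix d assume "A - B = mat d"
  then have "smul c A - smul c B = mat (c * d)" by (simp add: smul_diff[symmetric] vec_eq_iff smul_entry)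
  then show "\<exists>d. smul c A - smul c B = mat d" by blast
qed

lemma smul_sum_const: "(\<Sum>x\<in>S. (M :: 'k::field^'n::finite^'n)) = smul (of_nat (card S)) M"
  by (simp add: vec_eq_iff smul_entry del: sum_constant) (simp add: sum_constant)

lemma smul_smul: "smul a (smul b M) = smul (a * b) M"
  by (simp add: vec_eq_iff smul_entry)

lemma smul_one: "smul 1 M = M"
  by (simp add: smul_def)

definition Dset :: "('n::finite \<Rightarrow> 'k::field) set" where
  "Dset = {x. \<forall>a. x a \<noteq> 0}"

lemma card_Dset: "of_nat (card (Dset :: ('n::finite \<Rightarrow> 'k::{field,finite}) set)) = ((-1)::'k) ^ CARD('n)"
proof -
  have e: "(Dset :: ('n \<Rightarrow> 'k) set) = (PiE UNIV (\<lambda>_. UNIV - {0::'k}) :: ('n \<Rightarrow> 'k) set)"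
    by (auto simp: Dset_def PiE_UNIV_domain)
  have "card (PiE (UNIV :: 'n set) (\<lambda>_. UNIV - {0::'k})) = (CARD('k) - 1) ^ CARD('n)"
    by (simp add: card_PiE card_Diff_singleton)
  then have "card (Dset :: ('n \<Rightarrow> 'k) set) = (CARD('k) - 1) ^ CARD('n)" unfolding e .
  moreover have "of_nat (CARD('k) - 1) = (-1::'k)"
    using card_zero_field[where 'k='k] by (simp add: of_nat_diff)
  ultimately show ?thesis by simp
qed


definition piD :: "('n::finite \<Rightarrow> 'k::field) \<Rightarrow> 'n \<Rightarrow> 'k" where
  "piD x = (\<lambda>a. if a = undefined then x a * inverse (prod x UNIV) else x a)"

lemma Dset_prod_nz: "x \<in> Dset \<Longrightarrow> prod x UNIV \<noteq> 0"
  by (simp add: Dset_def)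

lemma piD_nz: "x \<in> Dset \<Longrightarrow> piD x a \<noteq> 0"
  by (simp add: piD_def Dset_def)

lemma piD_prod: "x \<in> Dset \<Longrightarrow> prod (piD x) UNIV = 1"
proof -
  assume x: "x \<in> Dset"
  have e: "piD x = (\<lambda>b. if b = undefined then x undefined * inverse (prod x UNIV) else x b)"
    by (auto simp: piD_def fun_eq_iff)
  have "prod (piD x) UNIV = x undefined * inverse (prod x UNIV) * prod x (UNIV - {undefined})"
    unfolding e by (rule prod_if_pt) auto
  also have "\<dots> = inverse (prod x UNIV) * (x undefined * prod x (UNIV - {undefined}))" by simp
  also have "x undefined * prod x (UNIV - {undefined}) = prod x UNIV"
    by (rule prod.remove[symmetric]) auto
  finally show ?thesis using Dset_prod_nz[OF x] by simp
qed

lemma piD_mult: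
  assumes x: "x \<in> Dset" and sg: "prod \<sigma> UNIV = 1"
  shows "diagm \<sigma> ** diagm (piD x) = diagm (piD (\<lambda>a. \<sigma> a * x a))"
proof -
  have h: "prod (\<lambda>a. \<sigma> a * x a) UNIV = prod x UNIV" using sg by (simp add: prod.distrib)
  have "piD (\<lambda>a. \<sigma> a * x a) = (\<lambda>a. \<sigma> a * piD x a)"
    unfolding piD_def h by (auto simp: fun_eq_iff)
  then show ?thesis by (simp add: diagm_mult)
qed

lemma torus_normalize:
  fixes H :: "('k::{field,finite}^'n::finite^'n) set" and f
  assumes H: "is_subgroup_GL H" and SLH: "SL \<subseteq> H" and f: "pgl_cocycle H f"
  shows "\<exists>Y. \<forall>\<sigma>. (\<forall>a. \<sigma> a \<noteq> 0) \<longrightarrow> prod \<sigma> UNIV = 1 \<longrightarrow> pgl_eq (fsh f Y (diagm \<sigma>)) 0"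
proof -
  let ?d = "\<lambda>x. diagm (piD x) :: 'k^'n^'n"
  have dH: "?d x \<in> H" if "x \<in> Dset" for x
    using SLH piD_prod[OF that] by (auto simp: SL_def det_diagm)
  define Y0 where "Y0 = (\<Sum>x\<in>Dset. f (?d x))"
  define N :: 'k where "N = of_nat (card (Dset :: ('n \<Rightarrow> 'k) set))"
  have N0: "N \<noteq> 0" unfolding N_def card_Dset by simp
  define Y where "Y = smul (- inverse N) Y0"
  show ?thesis
  proof (intro exI allI impI)
    fix \<sigma> :: "'n \<Rightarrow> 'k" assume nz: "\<forall>a. \<sigma> a \<noteq> 0" and p: "prod \<sigma> UNIV = 1"
    let ?s = "diagm \<sigma>"
    have sH: "?s \<in> H" using SLH p by (auto simp: SL_def det_diagm)
    have sD: "\<sigma> \<in> Dset" using nz by (simp add: Dset_def)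
    have each: "pgl_eq (adj ?s (f (?d x))) (f (?d (\<lambda>a. \<sigma> a * x a)) - f ?s)" if x: "x \<in> Dset" for x
    proof -
      have "pgl_eq (f (?s ** ?d x)) (f ?s + adj ?s (f (?d x)))" using coc_mult[OF f sH dH[OF x]] .
      from pgl_diff[OF this pgl_refl[of "f ?s"]] have "pgl_eq (f (?s ** ?d x) - f ?s) (adj ?s (f (?d x)))" by simp
      then show ?thesis unfolding piD_mult[OF x p] by (rule pgl_sym)
    qed
    have "adj ?s Y0 = (\<Sum>x\<in>Dset. adj ?s (f (?d x)))" unfolding Y0_def by (rule adj_sum) simp
    moreover have "pgl_eq (\<Sum>x\<in>Dset. adj ?s (f (?d x))) (\<Sum>x\<in>Dset. f (?d (\<lambda>a. \<sigma> a * x a)) - f ?s)"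
      by (rule pgl_sum) (simp_all add: each)
    moreover have "(\<Sum>x\<in>Dset. f (?d (\<lambda>a. \<sigma> a * x a)) - f ?s) = Y0 - smul N (f ?s)"
    proof -
      have "(\<Sum>x\<in>Dset. f (?d (\<lambda>a. \<sigma> a * x a))) = Y0"
        unfolding Y0_def
        by (rule sum.reindex_bij_witness[of _ "\<lambda>x a. inverse (\<sigma> a) * x a" "\<lambda>x a. \<sigma> a * x a"])
           (auto simp: Dset_def nz fun_eq_iff)
      then show ?thesis by (simp add: sum_subtractf smul_sum_const N_def del: sum_constant)
    qed
    ultimately have A: "pgl_eq (adj ?s Y0) (Y0 - smul N (f ?s))" by simp
    have "adj ?s Y - Y = smul (- inverse N) (adj ?s Y0 - Y0)"
      by (simp add: Y_def adj_smul smul_diff)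
    moreover have "pgl_eq (smul (- inverse N) (adj ?s Y0 - Y0)) (smul (- inverse N) (Y0 - smul N (f ?s) - Y0))"
      by (rule pgl_smul[OF pgl_diff[OF A pgl_refl]])
    moreover have "smul (- inverse N) (Y0 - smul N (f ?s) - Y0) = f ?s"
      using N0 by (simp add: smul_smul smul_diff[symmetric] vec_eq_iff smul_entry)
    ultimately have B: "pgl_eq (adj ?s Y - Y) (f ?s)" by simp
    have "pgl_eq (f ?s - (adj ?s Y - Y)) (f ?s - f ?s)" by (rule pgl_diff[OF pgl_refl B])
    then show "pgl_eq (fsh f Y ?s) 0" by (simp add: fsh_def)
  qed
qed


lemma M1:
  assumes "i \<noteq> j" "j \<noteq> l" "i \<noteq> l"
  shows "tv i j s ** tv j l r ** matrix_inv (tv i j s) = tv j l r ** (tv i l (s * r) :: 'k::field^'n::finite^'n)"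
  unfolding inv_tv[OF assms(1)] using assms
  by (simp add: tv_def mm_add_left mm_add_right Em_Em matrix_mul_assoc)
     (auto simp: vec_eq_iff)

definition W :: "'n::finite \<Rightarrow> 'n \<Rightarrow> 'k::field \<Rightarrow> 'k^'n^'n" where
  "W i j s = mat 1 - Em i i 1 - Em j j 1 + Em i j s + Em j i (- inverse s)"

lemma M2:
  assumes "i \<noteq> j" "s \<noteq> 0"
  shows "tv i j s ** tv j i (- inverse s) ** tv i j s = (W i j s :: 'k::field^'n::finite^'n)"
  using assms
  by (simp add: W_def tv_def mm_add_left mm_add_right Em_Em matrix_mul_assoc)
     (auto simp: vec_eq_iff field_simps)

definition hh :: "'n::finite \<Rightarrow> 'n \<Rightarrow> 'k::field \<Rightarrow> 'n \<Rightarrow> 'k" where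
  "hh i j s = (\<lambda>a. if a = i then inverse s else if a = j then s else 1)"

lemma M3:
  assumes "i \<noteq> j" "s \<noteq> 0"
  shows "W i j s = W i j 1 ** diagm (hh i j s :: 'n::finite \<Rightarrow> 'k::field)"
  using assms by (auto simp: vec_eq_iff W_def diagm_mult_right hh_def)


lemma hh_nz: "s \<noteq> 0 \<Longrightarrow> hh i j s a \<noteq> 0" by (simp add: hh_def)

lemma hh_prod: "i \<noteq> j \<Longrightarrow> s \<noteq> 0 \<Longrightarrow> prod (hh i j s) UNIV = 1"
proof -
  assume ij: "i \<noteq> j" and s: "s \<noteq> 0"
  have "prod (hh i j s) UNIV = inverse s * prod (\<lambda>b. if b = j then s else 1) (UNIV - {i})"
    unfolding hh_def by (rule prod_if_pt) auto
  also have "prod (\<lambda>b. if b = j then s else 1) (UNIV - {i}) = s * prod (\<lambda>_. 1) (UNIV - {i} - {j})"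
    using ij by (intro prod_if_pt) auto
  finally show ?thesis using s by simp
qed

locale normctx =
  fixes H :: "('k::{field,finite}^'n::finite^'n) set" and f :: "'k^'n^'n \<Rightarrow> 'k^'n^'n"
  assumes H: "is_subgroup_GL H" and SLH: "SL \<subseteq> H" and f: "pgl_cocycle H f"
    and torus: "\<And>x. (\<And>a. x a \<noteq> 0) \<Longrightarrow> prod x UNIV = 1 \<Longrightarrow> pgl_eq (f (diagm x)) 0"
    and card: "CARD('k) > 9"
begin

lemma rc: "i \<noteq> j \<Longrightarrow> rootctx H f i j"
  by (unfold_locales) (use H SLH f torus card in auto)

definition "bb i j = f (tv i j 1) $ i $ j"

lemma rform: "i \<noteq> j \<Longrightarrow> pgl_eq (f (tv i j s)) (Em i j (bb i j * s))"
  using rootctx.root_form[OF rc] by (simp add: bb_def)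

lemma tvH: "i \<noteq> j \<Longrightarrow> tv i j s \<in> H" using tv_in_SL SLH by blast

lemma R2:
  assumes ij: "i \<noteq> j" and jl: "j \<noteq> l" and il: "i \<noteq> l"
  shows "bb i l = bb i j + bb j l"
proof -
  let ?u = "tv i j 1 :: 'k^'n^'n" and ?v = "tv j l 1 :: 'k^'n^'n" and ?w = "tv i l 1 :: 'k^'n^'n"
  have uH: "?u \<in> H" and vH: "?v \<in> H" and wH: "?w \<in> H" using tvH ij jl il by auto
  have iu: "invertible ?u" "invertible ?v" "invertible ?w" using invertible_tv ij jl il by auto
  have eq: "?u ** ?v ** matrix_inv ?u = ?v ** ?w" using M1[OF ij jl il, of 1 1] by simp
  have ivw: "invertible (?v ** ?w)" using invertible_mult iu by blast
  have A: "pgl_eq (f (?v ** ?w)) (f ?u + adj ?u (f ?v) - adj (?v ** ?w) (f ?u))"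
    using coc_conj[OF H f uH vH] unfolding eq .
  have A2: "pgl_eq (f ?u + adj ?u (f ?v) - adj (?v ** ?w) (f ?u))
     (Em i j (bb i j * 1) + adj ?u (Em j l (bb j l * 1)) - adj (?v ** ?w) (Em i j (bb i j * 1)))"
    by (intro pgl_diff pgl_add rform pgl_adj iu ivw ij jl)
  have B: "pgl_eq (f (?v ** ?w)) (f ?v + adj ?v (f ?w))" using coc_mult[OF f vH wH] .
  have B2: "pgl_eq (f ?v + adj ?v (f ?w)) (Em j l (bb j l * 1) + adj ?v (Em i l (bb i l * 1)))"
    by (intro pgl_add rform pgl_adj iu jl il)
  have C: "pgl_eq (Em i j (bb i j * 1) + adj ?u (Em j l (bb j l * 1)) - adj (?v ** ?w) (Em i j (bb i j * 1)))
     (Em j l (bb j l * 1) + adj ?v (Em i l (bb i l * 1)))"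
    using pgl_trans[OF pgl_sym[OF pgl_trans[OF A A2]] pgl_trans[OF B B2]] .
  from pgl_offdiag[OF C il] have "bb j l + bb i j = bb i l"
    using ij jl il by (simp add: adj_tv_entry adj_mult iu)
  then show ?thesis by (simp add: add.commute)
qed

lemma R1:
  assumes ij: "i \<noteq> j"
  shows "bb j i = - bb i j"
proof -
  have ji: "j \<noteq> i" using ij by simp
  define Q where "Q s = Em i j (bb i j * s) + adj (tv i j s) (Em j i (bb j i * - inverse s))
      + adj (tv i j s) (adj (tv j i (- inverse s)) (Em i j (bb i j * s)))" for s :: 'k
  have fW: "pgl_eq (f (W i j s)) (Q s)" if s: "s \<noteq> 0" for s
  proof -
    let ?A = "tv i j s :: 'k^'n^'n" and ?B = "tv j i (- inverse s) :: 'k^'n^'n"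
    have AH: "?A \<in> H" and BH: "?B \<in> H" using tvH ij ji by auto
    have iA: "invertible ?A" "invertible ?B" using invertible_tv[OF ij] invertible_tv[OF ji] by blast+
    have BAH: "?B ** ?A \<in> H" using H_mult[OF H BH AH] .
    have e: "W i j s = ?A ** (?B ** ?A)" using M2[OF ij s] by (simp add: matrix_mul_assoc)
    have 1: "pgl_eq (f (?A ** (?B ** ?A))) (f ?A + adj ?A (f (?B ** ?A)))" using coc_mult[OF f AH BAH] .
    have 2: "pgl_eq (f ?A + adj ?A (f (?B ** ?A))) (f ?A + adj ?A (f ?B + adj ?B (f ?A)))"
      by (intro pgl_add pgl_refl pgl_adj iA coc_mult[OF f BH AH])
    have 3: "pgl_eq (f ?A + adj ?A (f ?B + adj ?B (f ?A)))
       (Em i j (bb i j * s) + adj ?A (Em j i (bb j i * - inverse s) + adj ?B (Em i j (bb i j * s))))"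
      by (intro pgl_add pgl_adj iA rform ij ji)
    show ?thesis unfolding e Q_def using pgl_trans[OF pgl_trans[OF 1 2] 3] by (simp add: adj_add add.assoc)
  qed
  have Wrel: "pgl_eq (f (W i j s)) (f (W i j (1::'k)))" if s: "s \<noteq> 0" for s
  proof -
    have W1H: "W i j 1 \<in> H" using M2[OF ij, of 1] tvH[OF ij] tvH[OF ji] H_mult[OF H] by (metis one_neq_zero)
    have hH: "diagm (hh i j s) \<in> H" using SLH hh_prod[OF ij s] by (auto simp: SL_def det_diagm)
    have iW: "invertible (W i j (1::'k))" using H_inv[OF H W1H] .
    have 1: "pgl_eq (f (W i j s)) (f (W i j (1::'k)) + adj (W i j (1::'k)) (f (diagm (hh i j s))))"
      unfolding M3[OF ij s] using coc_mult[OF f W1H hH] .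
    have 2: "pgl_eq (f (W i j (1::'k)) + adj (W i j (1::'k)) (f (diagm (hh i j s)))) (f (W i j (1::'k)) + adj (W i j (1::'k)) 0)"
      by (intro pgl_add pgl_refl pgl_adj iW torus hh_nz hh_prod ij s)
    show ?thesis using pgl_trans[OF 1 2] by (simp add: adj_zero)
  qed
  have Qij: "Q s $ i $ j = s * (bb i j + bb j i)" if s: "s \<noteq> 0" for s
    using ij s by (simp add: Q_def adj_tv_entry field_simps)
  obtain c :: 'k where c: "c \<noteq> 0" "c ^ 1 \<noteq> 1" using exists_pow_ne1[where 'k='k, of 1] card by auto
  have "pgl_eq (Q c) (Q 1)"
    using pgl_trans[OF pgl_trans[OF pgl_sym[OF fW[OF c(1)]] Wrel[OF c(1)]] fW] by simp
  from pgl_offdiag[OF this ij] have "c * (bb i j + bb j i) = 1 * (bb i j + bb j i)"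
    using Qij c(1) by simp
  then have "(c - 1) * (bb i j + bb j i) = 0" by (simp add: algebra_simps)
  then show ?thesis using c by (simp add: eq_neg_iff_add_eq_0 add.commute)
qed

end


lemma induct_matrix_row_operations_f:
  fixes P :: "'a::field^'n::finite^'n \<Rightarrow> bool"
  assumes zero_row: "\<And>A i. row i A = 0 \<Longrightarrow> P A"
    and diagonal: "\<And>A. (\<And>i j. i \<noteq> j \<Longrightarrow> A$i$j = 0) \<Longrightarrow> P A"
    and swap_cols: "\<And>A m n. \<lbrakk>P A; m \<noteq> n\<rbrakk> \<Longrightarrow> P(\<chi> i j. A $ i $ Transposition.transpose m n j)"
    and row_op: "\<And>A m n c. \<lbrakk>P A; m \<noteq> n\<rbrakk>
                   \<Longrightarrow> P(\<chi> i. if i = m then row m A + c *s row n A else row i A)"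
  shows "P A"
proof -
  have "P A" if "(\<And>i j. \<lbrakk>j \<in> -K;  i \<noteq> j\<rbrakk> \<Longrightarrow> A$i$j = 0)" for A K
  proof -
    have "finite K"
      by simp
    then show ?thesis using that
    proof (induction arbitrary: A rule: finite_induct)
      case empty
      with diagonal show ?case
        by simp
    next
      case (insert k K)
      note insertK = insert
      have "P A" if kk: "A$k$k \<noteq> 0"
        and 0: "\<And>i j. \<lbrakk>j \<in> - insert k K; i \<noteq> j\<rbrakk> \<Longrightarrow> A$i$j = 0"
               "\<And>i. \<lbrakk>i \<in> -L; i \<noteq> k\<rbrakk> \<Longrightarrow> A$i$k = 0" for A L
      proof -
        have "finite L"
          by simp
        then show ?thesis using 0 kk
        proof (induction arbitrary: A rule: finite_induct)
          case (empty B)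
          show ?case
          proof (rule insertK)
            fix i j
            assume "i \<in> - K" "j \<noteq> i"
            show "B $ j $ i = 0"
              using \<open>j \<noteq> i\<close> \<open>i \<in> - K\<close> empty
              by (metis ComplD ComplI Compl_eq_Diff_UNIV Diff_empty UNIV_I insert_iff)
          qed
        next
          case (insert l L B)
          show ?case
          proof (cases "k = l")
            case True
            with insert show ?thesis
              by auto
          next
            case False
            let ?C = "\<chi> i. if i = l then row l B - (B $ l $ k / B $ k $ k) *s row k B else row i B"
            have 1: "\<lbrakk>j \<in> - insert k K; i \<noteq> j\<rbrakk> \<Longrightarrow> ?C $ i $ j = 0" for j i
              by (auto simp: insert.prems(1) row_def)
            have 2: "?C $ i $ k = 0"
              if "i \<in> - L" "i \<noteq> k" for i
            proof (cases "i=l")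
              case True
              with that insert.prems show ?thesis
                by (simp add: row_def)
            next
              case False
              with that show ?thesis
                by (simp add: insert.prems(2) row_def)
            qed
            have 3: "?C $ k $ k \<noteq> 0"
              by (auto simp: insert.prems row_def \<open>k \<noteq> l\<close>)
            have PC: "P ?C"
              using insert.IH [OF 1 2 3] by auto
            have eqB: "(\<chi> i. if i = l then row l ?C + (B $ l $ k / B $ k $ k) *s row k ?C else row i ?C) = B"
              using \<open>k \<noteq> l\<close> by (simp add: vec_eq_iff row_def)
            show ?thesis
              using row_op [OF PC, of l k, where c = "B$l$k / B$k$k"] eqB \<open>k \<noteq> l\<close>
              by (simp add: cong: if_cong)
          qed
        qed
      qed
      then have nonzero_hyp: "P A"
        if kk: "A$k$k \<noteq> 0" and zeroes: "\<And>i j. j \<in> - insert k K \<and> i\<noteq>j \<Longrightarrow> A$i$j = 0" for A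
        by (auto simp: intro!: kk zeroes)
      show ?case
      proof (cases "row k A = 0")
        case True
        with zero_row show ?thesis by auto
      next
        case False
        then obtain l where l: "A$k$l \<noteq> 0"
          by (auto simp: row_def zero_vec_def vec_eq_iff)
        show ?thesis
        proof (cases "k = l")
          case True
          with l nonzero_hyp insert.prems show ?thesis
            by blast
        next
          case False
          have *: "A $ i $ Transposition.transpose k l j = 0" if "j \<noteq> k" "j \<notin> K" "i \<noteq> j" for i j
            using False l insert.prems that
            by (auto simp add: Transposition.transpose_def)
          have "P (\<chi> i j. (\<chi> i j. A $ i $ Transposition.transpose k l j) $ i $ Transposition.transpose k l j)"
            by (rule swap_cols [OF nonzero_hyp False]) (auto simp: l *)
          moreover
          have "(\<chi> i j. (\<chi> i j. A $ i $ Transposition.transpose k l j) $ i $ Transposition.transpose k l j) = A"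
            by simp
          ultimately show ?thesis
            by simp
        qed
      qed
    qed
  qed
  then show ?thesis
    by blast
qed

lemma induct_matrix_elementary_f:
  fixes P :: "'a::field^'n::finite^'n \<Rightarrow> bool"
  assumes mult: "\<And>A B. \<lbrakk>P A; P B\<rbrakk> \<Longrightarrow> P(A ** B)"
    and zero_row: "\<And>A i. row i A = 0 \<Longrightarrow> P A"
    and diagonal: "\<And>A. (\<And>i j. i \<noteq> j \<Longrightarrow> A$i$j = 0) \<Longrightarrow> P A"
    and swap1: "\<And>m n. m \<noteq> n \<Longrightarrow> P(\<chi> i j. mat 1 $ i $ Transposition.transpose m n j)"
    and idplus: "\<And>m n c. m \<noteq> n \<Longrightarrow> P(\<chi> i j. if i = m \<and> j = n then c else of_bool (i = j))"
  shows "P A"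
proof -
  have swap: "P (\<chi> i j. A $ i $ Transposition.transpose m n j)"  (is "P ?C")
    if "P A" "m \<noteq> n" for A m n
  proof -
    have "A ** (\<chi> i j. mat 1 $ i $ Transposition.transpose m n j) = ?C"
      by (simp add: matrix_matrix_mult_def mat_def vec_eq_iff if_distrib sum.delta_remove)
    then show ?thesis
      using mult swap1 that by metis
  qed
  have row: "P (\<chi> i. if i = m then row m A + c *s row n A else row i A)"  (is "P ?C")
    if "P A" "m \<noteq> n" for A m n c
  proof -
    let ?B = "\<chi> i j. if i = m \<and> j = n then c else of_bool (i = j)"
    have "?B ** A = ?C"
      using \<open>m \<noteq> n\<close> unfolding matrix_matrix_mult_def row_def of_bool_def
      by (auto simp: vec_eq_iff if_distrib [of "\<lambda>x. x * y" for y] sum.remove cong: if_cong)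
    then show ?thesis
      by (rule subst) (auto simp: that mult idplus)
  qed
  show ?thesis
    by (rule induct_matrix_row_operations_f [OF zero_row diagonal swap row])
qed


lemma conj_diag_gen:
  assumes "\<And>a. x a \<noteq> 0" "i \<noteq> j"
  shows "diagm x ** tv i j s ** matrix_inv (diagm x) = tv i j (x i * s * inverse (x j))"
  using assms by (auto simp: vec_eq_iff inv_diagm diagm_mult_left diagm_mult_right tv_entry)

lemma det_sandwich: "det (diagm x ** A ** diagm y) = prod x UNIV * det A * prod y UNIV"
  by (simp add: det_mul det_diagm)

lemma diag_in_G:
  fixes G :: "('k::field^'n::finite^'n) set"
  assumes dG: "\<And>x. (\<And>a. x a \<noteq> 0) \<Longrightarrow> prod x UNIV = 1 \<Longrightarrow> diagm x \<in> G"
    and off: "\<And>a b. a \<noteq> b \<Longrightarrow> M $ a $ b = 0" and d: "det M = 1"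
  shows "M \<in> G"
proof -
  have e: "M = diagm (\<lambda>a. M $ a $ a)" using off by (auto simp: vec_eq_iff)
  have p: "prod (\<lambda>a. M $ a $ a) UNIV = 1" using d det_diagonal[of M] off by simp
  then have nz: "M $ a $ a \<noteq> 0" for a by (metis UNIV_I finite prod_zero_iff zero_neq_one)
  show ?thesis by (subst e) (rule dG[OF nz p])
qed

lemma SL_gen:
  fixes G :: "('k::field^'n::finite^'n) set"
  assumes mult: "\<And>A B. A \<in> G \<Longrightarrow> B \<in> G \<Longrightarrow> A ** B \<in> G"
    and tvG: "\<And>i j s. i \<noteq> j \<Longrightarrow> tv i j s \<in> G"
    and dG: "\<And>x. (\<And>a. x a \<noteq> 0) \<Longrightarrow> prod x UNIV = 1 \<Longrightarrow> diagm x \<in> G"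
    and det: "det A = 1"
  shows "A \<in> G"
proof -
  define P where "P A \<longleftrightarrow> invertible A \<longrightarrow> (\<forall>x y. (\<forall>a. x a \<noteq> 0) \<longrightarrow> (\<forall>a. y a \<noteq> 0) \<longrightarrow>
      det (diagm x ** A ** diagm y) = 1 \<longrightarrow> diagm x ** A ** diagm y \<in> G)" for A :: "'k^'n^'n"
  have "P A" for A
  proof (rule induct_matrix_elementary_f)
    fix A B :: "'k^'n^'n" assume PA: "P A" and PB: "P B"
    show "P (A ** B)" unfolding P_def
    proof (intro impI allI)
      fix x y :: "'n \<Rightarrow> 'k"
      assume iAB: "invertible (A ** B)" and x: "\<forall>a. x a \<noteq> 0" and y: "\<forall>a. y a \<noteq> 0"
        and d1: "det (diagm x ** (A ** B) ** diagm y) = 1"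
      have dA: "det A \<noteq> 0" and dB: "det B \<noteq> 0" using iAB by (auto simp: invertible_det_nz det_mul)
      have px: "prod x UNIV \<noteq> 0" using x by simp
      define e :: "'n \<Rightarrow> 'k" where "e = (\<lambda>a. if a = undefined then inverse (prod x UNIV * det A) else (1::'k))"
      define e' :: "'n \<Rightarrow> 'k" where "e' = (\<lambda>a. inverse (e a))"
      have enz: "\<forall>a. e a \<noteq> 0" "\<forall>a. e' a \<noteq> 0" using dA px by (auto simp: e_def e'_def)
      have ee: "diagm e ** diagm e' = mat 1"
        using enz by (simp add: diagm_mult e'_def diagm_one[symmetric])
      have pe: "prod e UNIV = inverse (prod x UNIV * det A)"
        unfolding e_def by (subst prod_if_pt) auto
      have dL: "det (diagm x ** A ** diagm e) = 1" using dA px by (simp add: det_sandwich pe field_simps)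
      have split: "diagm x ** (A ** B) ** diagm y = (diagm x ** A ** diagm e) ** (diagm e' ** B ** diagm y)"
      proof -
        have "(diagm x ** A ** diagm e) ** (diagm e' ** B ** diagm y) = diagm x ** A ** (diagm e ** diagm e') ** B ** diagm y"
          by (simp add: matrix_mul_assoc)
        then show ?thesis by (simp add: ee matrix_mul_assoc)
      qed
      have dR: "det (diagm e' ** B ** diagm y) = 1"
        using d1 unfolding split det_mul[of "diagm x ** A ** diagm e"] dL by simp
      have iA: "invertible A" "invertible B" using dA dB by (simp_all add: invertible_det_nz)
      have "diagm x ** A ** diagm e \<in> G" using PA iA x enz dL unfolding P_def by blast
      moreover have "diagm e' ** B ** diagm y \<in> G" using PB iA y enz dR unfolding P_def by blast
      ultimately show "diagm x ** (A ** B) ** diagm y \<in> G" unfolding split by (rule mult)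
    qed
  next
    fix A :: "'k^'n^'n" and i assume "row i A = 0"
    then have "det A = 0" by (rule det_zero_row)
    then show "P A" by (simp add: P_def invertible_det_nz)
  next
    fix A :: "'k^'n^'n" assume off: "\<And>i j. i \<noteq> j \<Longrightarrow> A $ i $ j = 0"
    show "P A" unfolding P_def
    proof (intro impI allI)
      fix x y :: "'n \<Rightarrow> 'k" assume "det (diagm x ** A ** diagm y) = 1"
      moreover have "(diagm x ** A ** diagm y) $ a $ b = 0" if "a \<noteq> b" for a b
        using off[OF that] by (simp add: diagm_mult_left diagm_mult_right)
      ultimately show "diagm x ** A ** diagm y \<in> G" using diag_in_G[OF dG] by blast
    qed
  next
    fix m n :: 'n assume mn: "m \<noteq> n"
    let ?S = "(\<chi> i j. mat 1 $ i $ Transposition.transpose m n j) :: 'k^'n^'n"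
    show "P ?S" unfolding P_def
    proof (intro impI allI)
      fix x y :: "'n \<Rightarrow> 'k" assume x: "\<forall>a. x a \<noteq> 0" and y: "\<forall>a. y a \<noteq> 0"
        and d1: "det (diagm x ** ?S ** diagm y) = 1"
      define z :: "'n \<Rightarrow> 'k" where "z = (\<lambda>a. if a = m then - (x n * y m) else if a = n then x m * y n else x a * y a)"
      have znz: "z a \<noteq> 0" for a using x y by (simp add: z_def)
      have nm: "n \<noteq> m" using mn by simp
      let ?W = "tv m n 1 ** tv n m (-1) ** tv m n (1::'k)"
      have WG: "?W \<in> G" using mult tvG mn nm by blast
      have We: "?W = W m n 1" using M2[OF mn, of 1] by simp
      have eq: "diagm x ** ?S ** diagm y = ?W ** diagm z"
        unfolding We using mn
        by (auto simp: vec_eq_iff diagm_mult_left diagm_mult_right W_def z_def Transposition.transpose_def)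
      have dW: "det ?W = 1" by (simp add: det_mul det_tv mn nm)
      have pz: "prod z UNIV = 1" using d1 unfolding eq det_mul det_diagm by (simp add: det_tv mn nm)
      show "diagm x ** ?S ** diagm y \<in> G" unfolding eq by (rule mult[OF WG dG[OF znz pz]])
    qed
  next
    fix m n :: 'n and c :: 'k assume mn: "m \<noteq> n"
    let ?T = "(\<chi> i j. if i = m \<and> j = n then c else of_bool (i = j)) :: 'k^'n^'n"
    have Te: "?T = tv m n c" using mn by (auto simp: vec_eq_iff tv_def)
    show "P ?T" unfolding P_def Te
    proof (intro impI allI)
      fix x y :: "'n \<Rightarrow> 'k" assume x: "\<forall>a. x a \<noteq> 0" and y: "\<forall>a. y a \<noteq> 0"
        and d1: "det (diagm x ** tv m n c ** diagm y) = 1"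
      have ix: "invertible (diagm x)" using invertible_diagm x by blast
      have eq: "diagm x ** tv m n c ** diagm y = tv m n (x m * c * inverse (x n)) ** diagm (\<lambda>a. x a * y a)"
      proof -
        have "tv m n (x m * c * inverse (x n)) ** diagm (\<lambda>a. x a * y a)
            = diagm x ** tv m n c ** matrix_inv (diagm x) ** (diagm x ** diagm y)"
          using conj_diag_gen[of x m n c] x mn by (simp add: diagm_mult)
        also have "\<dots> = diagm x ** tv m n c ** (matrix_inv (diagm x) ** diagm x) ** diagm y"
          by (simp add: matrix_mul_assoc)
        finally show ?thesis by (simp add: inv_props ix)
      qed
      have pz: "prod (\<lambda>a. x a * y a) UNIV = 1"
        using d1 unfolding eq det_mul det_tv[OF mn] det_diagm by simp
      show "diagm x ** tv m n c ** diagm y \<in> G" unfolding eq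
        by (rule mult[OF tvG[OF mn] dG]) (use x y pz in auto)
    qed
  qed
  then have "P A" .
  moreover have "invertible A" using det by (simp add: invertible_det_nz)
  ultimately have h: "\<forall>x y. (\<forall>a. x a \<noteq> 0) \<longrightarrow> (\<forall>a. y a \<noteq> 0) \<longrightarrow>
      det (diagm x ** A ** diagm y) = 1 \<longrightarrow> diagm x ** A ** diagm y \<in> G" unfolding P_def by blast
  show ?thesis using h[rule_format, of "\<lambda>_. 1" "\<lambda>_. 1"] det by (simp add: diagm_one)
qed


lemma adj_tv_diagm: "i \<noteq> j \<Longrightarrow> adj (tv i j s) (diagm x) - diagm x = Em i j (s * (x j - x i))"
  by (auto simp: vec_eq_iff adj_tv_entry algebra_simps)

lemma adj_diagm_diagm: "(\<And>a. y a \<noteq> 0) \<Longrightarrow> adj (diagm y) (diagm x) = diagm x"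
  by (auto simp: vec_eq_iff adj_diagm_entry)

lemma SL_invariant_zero:
  fixes Z :: "'k::{field,finite}^'n::finite^'n"
  assumes inv: "\<And>v. v \<in> SL \<Longrightarrow> pgl_eq (adj v Z) Z" and card: "CARD('k) > 9"
  shows "pgl_eq Z 0"
proof -
  obtain c :: 'k where c: "c \<noteq> 0" "c ^ 2 \<noteq> 1" using exists_pow_ne1[where 'k='k, of 2] card by auto
  have off: "Z $ a $ b = 0" if ab: "a \<noteq> b" for a b
  proof -
    define t :: "'n \<Rightarrow> 'k" where "t = (\<lambda>x. if x = a then c else if x = b then inverse c else 1)"
    have tnz: "t x \<noteq> 0" for x using c by (simp add: t_def)
    have pt: "prod t UNIV = 1"
    proof -
      have "prod t UNIV = c * prod (\<lambda>x. if x = b then inverse c else 1) (UNIV - {a})"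
        unfolding t_def by (rule prod_if_pt) auto
      also have "prod (\<lambda>x. if x = b then inverse c else 1) (UNIV - {a}) = inverse c * prod (\<lambda>_. 1) (UNIV - {a} - {b})"
        using ab by (intro prod_if_pt) auto
      finally show ?thesis using c by simp
    qed
    have tSL: "diagm t \<in> SL" using pt by (simp add: SL_def det_diagm)
    have ae: "adj (diagm t) Z $ a $ b = t a * Z $ a $ b * inverse (t b)" by (rule adj_diagm_entry[OF tnz])
    have ta: "t a = c" "t b = inverse c" using ab by (auto simp: t_def)
    from pgl_offdiag[OF inv[OF tSL] ab] have "c * Z $ a $ b * c = Z $ a $ b"
      unfolding ae ta by simp
    then have "Z $ a $ b * (c * c - 1) = 0" by (simp add: algebra_simps)
    moreover have "c * c - 1 \<noteq> 0" using c by (simp add: power2_eq_square)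
    ultimately show ?thesis by simp
  qed
  have dg: "Z $ a $ a = Z $ b $ b" for a b
  proof (cases "a = b")
    case False
    have "tv a b 1 \<in> SL" using tv_in_SL False by blast
    from pgl_offdiag[OF inv[OF this] False] have "Z $ a $ b + Z $ b $ b - Z $ a $ a - Z $ b $ a = Z $ a $ b"
      using False by (simp add: adj_tv_entry)
    then show ?thesis using off False by simp
  qed simp
  show ?thesis by (rule pgl_intro) (use off dg in auto)
qed

context normctx
begin

lemma exists_x: "\<exists>x. \<forall>i j. i \<noteq> j \<longrightarrow> bb i j = x j - x i"
proof -
  define x where "x a = (if a = undefined then 0 else bb undefined a)" for a
  have "bb i j = x j - x i" if ij: "i \<noteq> j" for i j
  proof (cases "i = undefined")
    case True then show ?thesis using ij by (simp add: x_def)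
  next
    case iu: False
    show ?thesis
    proof (cases "j = undefined")
      case True then show ?thesis using ij iu R1[of j i] by (simp add: x_def)
    next
      case False
      then show ?thesis using R2[of undefined i j] ij iu by (simp add: x_def)
    qed
  qed
  then show ?thesis by blast
qed

lemma final_norm: "\<exists>X. \<forall>g\<in>H. pgl_eq (fsh f X g) 0"
proof -
  obtain x where x: "\<And>i j. i \<noteq> j \<Longrightarrow> bb i j = x j - x i" using exists_x by blast
  let ?f = "fsh f (diagm x)"
  have f2: "pgl_cocycle H ?f" using fsh_cocycle[OF H f] .
  have ftv: "pgl_eq (?f (tv i j s)) 0" if ij: "i \<noteq> j" for i j s
  proof -
    have "pgl_eq (?f (tv i j s)) (Em i j (bb i j * s) - Em i j (s * (x j - x i)))"
      unfolding fsh_def adj_tv_diagm[OF ij] by (rule pgl_diff[OF rform[OF ij] pgl_refl])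
    moreover have "Em i j (bb i j * s) - Em i j (s * (x j - x i)) = 0"
    proof -
      have e: "bb i j * s = s * (x j - x i)" using x[OF ij] by simp
      show ?thesis unfolding e by simp
    qed
    ultimately show ?thesis by simp
  qed
  have fd: "pgl_eq (?f (diagm y)) 0" if "\<And>a. y a \<noteq> 0" "prod y UNIV = 1" for y
    using torus[OF that] that by (simp add: fsh_def adj_diagm_diagm)
  define G where "G = {g. g \<in> SL \<and> pgl_eq (?f g) 0}"
  have SLG: "A \<in> G" if "A \<in> SL" for A
  proof (rule SL_gen)
    fix A B assume A: "A \<in> G" and B: "B \<in> G"
    have AH: "A \<in> H" and BH: "B \<in> H" using A B SLH G_def by auto
    have iA: "invertible A" using H_inv[OF H AH] .
    have "pgl_eq (?f (A ** B)) (?f A + adj A (?f B))" using coc_mult[OF f2 AH BH] .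
    moreover have "pgl_eq (?f A + adj A (?f B)) (0 + adj A 0)"
      using A B by (intro pgl_add pgl_adj iA) (auto simp: G_def)
    ultimately have "pgl_eq (?f (A ** B)) 0" using pgl_trans by (simp add: adj_zero) 
    moreover have "A ** B \<in> SL" using A B by (auto simp: G_def SL_def det_mul)
    ultimately show "A ** B \<in> G" by (simp add: G_def)
  next
    fix i j :: 'n and s :: 'k assume "i \<noteq> j"
    then show "tv i j s \<in> G" using ftv tv_in_SL by (simp add: G_def)
  next
    fix y :: "'n \<Rightarrow> 'k" assume "\<And>a. y a \<noteq> 0" "prod y UNIV = 1"
    then show "diagm y \<in> G" using fd by (simp add: G_def SL_def det_diagm)
  next
    show "det A = 1" using that by (simp add: SL_def)
  qed
  have fSL: "pgl_eq (?f v) 0" if "v \<in> SL" for v using SLG[OF that] by (simp add: G_def)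
  have "pgl_eq (?f h) 0" if hH: "h \<in> H" for h
  proof -
    have ih: "invertible h" using H_inv[OF H hH] .
    have dh: "det h \<noteq> 0" using ih by (simp add: invertible_det_nz)
    define dv :: "'n \<Rightarrow> 'k" where "dv = (\<lambda>a. if a = undefined then det h else 1)"
    let ?d = "diagm dv"
    have dvnz: "dv a \<noteq> 0" for a using dh by (simp add: dv_def)
    have pdv: "prod dv UNIV = det h" unfolding dv_def by (subst prod_if_pt) auto
    have id: "invertible ?d" using invertible_diagm dvnz by blast
    let ?u = "h ** matrix_inv ?d"
    have detinv: "det (matrix_inv ?d) = inverse (det h)"
      using dvnz prod_inversef[of dv UNIV] by (simp add: inv_diagm det_diagm pdv comp_def)
    have uSL: "?u \<in> SL" using dh by (simp add: SL_def det_mul detinv)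
    have uH: "?u \<in> H" using uSL SLH by blast
    have iu: "invertible ?u" using invertible_mult[OF ih inv_inv(2)[OF id]] .
    have hud: "h = ?u ** ?d" by (simp add: matrix_mul_assoc[symmetric] inv_props id)
    have dH: "?d \<in> H"
    proof -
      have "matrix_inv ?u ** h = ?d"
        by (simp add: inv_mult ih inv_inv(2)[OF id] inv_inv(1)[OF id] matrix_mul_assoc[symmetric] inv_props)
      moreover have "matrix_inv ?u ** h \<in> H" using H_mult[OF H H_minv[OF H uH] hH] .
      ultimately show ?thesis by simp
    qed
    have invd: "pgl_eq (adj v (?f ?d)) (?f ?d)" if vSL: "v \<in> SL" for v
    proof -
      let ?w = "matrix_inv ?d ** v ** ?d"
      have wSL: "?w \<in> SL" using vSL dh by (simp add: SL_def det_mul detinv pdv det_diagm)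
      have wH: "?w \<in> H" using wSL SLH by blast
      have e: "?d ** ?w ** matrix_inv ?d = v"
        by (simp add: matrix_mul_assoc inv_props id) (simp add: matrix_mul_assoc[symmetric] inv_props id)
      have A: "pgl_eq (?f v) (?f ?d + adj ?d (?f ?w) - adj v (?f ?d))"
        using coc_conj[OF H f2 dH wH] unfolding e .
      have B: "pgl_eq (?f ?d + adj ?d (?f ?w) - adj v (?f ?d)) (?f ?d + adj ?d 0 - adj v (?f ?d))"
        by (intro pgl_diff pgl_add pgl_refl pgl_adj id fSL wSL)
      have C: "pgl_eq 0 (?f ?d - adj v (?f ?d))"
        using pgl_trans[OF pgl_sym[OF fSL[OF vSL]] pgl_trans[OF A B]] by (simp add: adj_zero)
      have "pgl_eq (0 + adj v (?f ?d)) (?f ?d - adj v (?f ?d) + adj v (?f ?d))"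
        by (rule pgl_add[OF C pgl_refl])
      then show ?thesis by simp
    qed
    have fd0: "pgl_eq (?f ?d) 0" by (rule SL_invariant_zero[OF invd card])
    have "pgl_eq (?f (?u ** ?d)) (?f ?u + adj ?u (?f ?d))" using coc_mult[OF f2 uH dH] .
    moreover have "pgl_eq (?f ?u + adj ?u (?f ?d)) (0 + adj ?u 0)"
      by (intro pgl_add pgl_adj iu fSL uSL fd0)
    ultimately show ?thesis unfolding hud[symmetric] using pgl_trans by (simp add: adj_zero)
  qed
  then show ?thesis by blast
qed

end

theorem mainTheorem11:
  fixes H :: "('k::{field,finite} ^'n::finite^'n) set"
  assumes "CARD('n) \<ge> 2"
    and "CARD('k) > 9"
    and "is_subgroup_GL H"
    and "SL \<subseteq> H"
  shows "H1_pgl_vanishes H"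
  unfolding H1_pgl_vanishes_def
proof (intro allI impI)
  fix f assume f: "pgl_cocycle H f"
  obtain Y where Y: "\<And>\<sigma>. (\<forall>a. \<sigma> a \<noteq> 0) \<Longrightarrow> prod \<sigma> UNIV = 1 \<Longrightarrow> pgl_eq (fsh f Y (diagm \<sigma>)) 0"
    using torus_normalize[OF assms(3,4) f] by blast
  have nc: "normctx H (fsh f Y)"
    by unfold_locales (use assms fsh_cocycle[OF assms(3) f] Y in auto)
  obtain X where X: "\<forall>g\<in>H. pgl_eq (fsh (fsh f Y) X g) 0" using normctx.final_norm[OF nc] by blast
  show "pgl_coboundary H f" using fsh_zero_cob[of H f "Y + X"] X by (simp add: fsh_fsh)
qed


end
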